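(* Let $\mathbb{K}$ be an algebraically closed field of characteristic $p$, with $p=0$ or $p>n$. Let $(\Lambda_1,\Lambda_2,\Lambda_3)$ be a regular dual $3$-net of order $n\ge4$ in $PG(2,\mathbb{K})$. Then the three lines containing the components are not concurrent, i.e. they are the sides of a triangle (the net is triangular).
   Context: A dual $3$-net of order $n$ in $PG(2,\mathbb{K})$ is a triple $(\Lambda_1,\Lambda_2,\Lambda_3)$ of pairwise disjoint point sets, each of size $n$, such that every line meeting two distinct components meets each component in exactly one point. It is regular if its three components are contained in three (distinct) lines, one component on each line; it is triangular if these three lines are the sides of a triangle. *)

theory Defs
  imports "HOL-Computational_Algebra.Polynomial"
begin

text \<open>Points and lines of the projective plane PG(2,K) are represented by their unique normalized
homogeneous coordinate vectors (first nonzero coordinate equal to 1).\<close>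

definition normalized :: "'a::field \<times> 'a \<times> 'a \<Rightarrow> bool" where
  "normalized v = (case v of (x, y, z) \<Rightarrow>
      x = 1 \<or> (x = 0 \<and> y = 1) \<or> (x = 0 \<and> y = 0 \<and> z = 1))"

definition proj_points :: "('a::field \<times> 'a \<times> 'a) set" where
  "proj_points = {v. normalized v}"

definition proj_lines :: "('a::field \<times> 'a \<times> 'a) set" where
  "proj_lines = {v. normalized v}"

definition incident :: "'a::field \<times> 'a \<times> 'a \<Rightarrow> 'a \<times> 'a \<times> 'a \<Rightarrow> bool" where
  "incident P l = (case P of (x, y, z) \<Rightarrow> case l of (a, b, c) \<Rightarrow> a * x + b * y + c * z = 0)"

definition points_on :: "'a::field \<times> 'a \<times> 'a \<Rightarrow> ('a \<times> 'a \<times> 'a) set" where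
  "points_on l = {P \<in> proj_points. incident P l}"

definition dual_3net ::
  "('a::field \<times> 'a \<times> 'a) set \<Rightarrow> ('a \<times> 'a \<times> 'a) set \<Rightarrow> ('a \<times> 'a \<times> 'a) set \<Rightarrow> nat \<Rightarrow> bool" where
  "dual_3net L1 L2 L3 n =
     (let L = (\<lambda>i::nat. if i = 1 then L1 else if i = 2 then L2 else L3) in
       (\<forall>i\<in>{1,2,3}. L i \<subseteq> proj_points \<and> finite (L i) \<and> card (L i) = n) \<and>
       (\<forall>i\<in>{1,2,3}. \<forall>j\<in>{1,2,3}. i \<noteq> j \<longrightarrow> L i \<inter> L j = {}) \<and>
       (\<forall>l\<in>proj_lines. (\<exists>i\<in>{1,2,3}. \<exists>j\<in>{1,2,3}. i \<noteq> j \<and>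
            points_on l \<inter> L i \<noteq> {} \<and> points_on l \<inter> L j \<noteq> {}) \<longrightarrow>
          (\<forall>k\<in>{1,2,3}. card (points_on l \<inter> L k) = 1)))"

definition regular_3net ::
  "('a::field \<times> 'a \<times> 'a) set \<Rightarrow> ('a \<times> 'a \<times> 'a) set \<Rightarrow> ('a \<times> 'a \<times> 'a) set \<Rightarrow> bool" where
  "regular_3net L1 L2 L3 =
     (\<exists>l1\<in>proj_lines. \<exists>l2\<in>proj_lines. \<exists>l3\<in>proj_lines.
        l1 \<noteq> l2 \<and> l1 \<noteq> l3 \<and> l2 \<noteq> l3 \<and>
        L1 \<subseteq> points_on l1 \<and> L2 \<subseteq> points_on l2 \<and> L3 \<subseteq> points_on l3)"

definition triangular_3net ::
  "('a::field \<times> 'a \<times> 'a) set \<Rightarrow> ('a \<times> 'a \<times> 'a) set \<Rightarrow> ('a \<times> 'a \<times> 'a) set \<Rightarrow> bool" where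
  "triangular_3net L1 L2 L3 =
     (\<exists>l1\<in>proj_lines. \<exists>l2\<in>proj_lines. \<exists>l3\<in>proj_lines.
        l1 \<noteq> l2 \<and> l1 \<noteq> l3 \<and> l2 \<noteq> l3 \<and>
        L1 \<subseteq> points_on l1 \<and> L2 \<subseteq> points_on l2 \<and> L3 \<subseteq> points_on l3 \<and>
        points_on l1 \<inter> points_on l2 \<inter> points_on l3 = {})"

end

theory Submission
  imports Defs
begin

definition det3 :: "'a::comm_ring_1 \<times> 'a \<times> 'a \<Rightarrow> 'a \<times> 'a \<times> 'a \<Rightarrow> 'a \<times> 'a \<times> 'a \<Rightarrow> 'a" where
  "det3 a b c = (case a of (a1,a2,a3) \<Rightarrow> case b of (b1,b2,b3) \<Rightarrow> case c of (c1,c2,c3) \<Rightarrow>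
     a1*(b2*c3 - b3*c2) - a2*(b1*c3 - b3*c1) + a3*(b1*c2 - b2*c1))"

definition cross :: "'a::comm_ring_1 \<times> 'a \<times> 'a \<Rightarrow> 'a \<times> 'a \<times> 'a \<Rightarrow> 'a \<times> 'a \<times> 'a" where
  "cross b c = (case b of (b1,b2,b3) \<Rightarrow> case c of (c1,c2,c3) \<Rightarrow>
     (b2*c3 - b3*c2, b3*c1 - b1*c3, b1*c2 - b2*c1))"

definition nrm :: "'a::field \<times> 'a \<times> 'a \<Rightarrow> 'a \<times> 'a \<times> 'a" where
  "nrm v = (case v of (x,y,z) \<Rightarrow> if x \<noteq> 0 then (1, y/x, z/x) else if y \<noteq> 0 then (0,1,z/y) else (0,0,1))"

lemma incident_cross: "incident a (cross b c) \<longleftrightarrow> det3 a b c = 0"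
proof -
  obtain a1 a2 a3 b1 b2 b3 c1 c2 c3 where "a=(a1,a2,a3)" "b=(b1,b2,b3)" "c=(c1,c2,c3)" by (cases a; cases b; cases c) auto
  moreover have "(b2*c3 - b3*c2)*a1 + (b3*c1 - b1*c3)*a2 + (b1*c2 - b2*c1)*a3 =
     a1*(b2*c3 - b3*c2) - a2*(b1*c3 - b3*c1) + a3*(b1*c2 - b2*c1)" by (simp add: algebra_simps)
  ultimately show ?thesis by (simp add: incident_def cross_def det3_def algebra_simps)
qed

lemma det3_swap12: "det3 b a c = - det3 a b c"
  by (cases a; cases b; cases c) (simp add: det3_def algebra_simps)
lemma det3_swap23: "det3 a c b = - det3 a b c"
  by (cases a; cases b; cases c) (simp add: det3_def algebra_simps)
lemma det3_cyc: "det3 c a b = det3 a b c"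
  by (cases a; cases b; cases c) (simp add: det3_def algebra_simps)
lemma det3_aab: "det3 a a b = 0"
  by (cases a; cases b) (simp add: det3_def algebra_simps)
lemma det3_aba: "det3 a b a = 0"
  by (cases a; cases b) (simp add: det3_def algebra_simps)
lemma det3_abb: "det3 a b b = 0"
  by (cases a; cases b) (simp add: det3_def algebra_simps)

lemma nrm_normalized: "normalized (nrm v)"
  by (cases v) (auto simp: nrm_def normalized_def)

lemma nrm_incident: "v \<noteq> (0,0,0) \<Longrightarrow> incident P (nrm v) \<longleftrightarrow> incident P v"
  apply (cases v; cases P)
  apply (auto simp: nrm_def incident_def field_simps split: if_splits)
  done

lemma normalized_nz: "normalized l \<Longrightarrow> l \<noteq> (0,0,0)"
  by (auto simp: normalized_def)

lemma cross_zero_eq: "normalized a \<Longrightarrow> normalized b \<Longrightarrow> cross a b = (0,0,0) \<Longrightarrow> a = (b::'a::field\<times>'a\<times>'a)"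
  apply (cases a; cases b)
  apply (auto simp: normalized_def cross_def)
  done

lemma collinear3:
  fixes l a b c :: "'a::field \<times> 'a \<times> 'a"
  assumes "l \<noteq> (0,0,0)" "incident a l" "incident b l" "incident c l"
  shows "det3 a b c = 0"
proof -
  obtain a1 a2 a3 b1 b2 b3 c1 c2 c3 l1 l2 l3 where e: "a=(a1,a2,a3)" "b=(b1,b2,b3)" "c=(c1,c2,c3)" "l=(l1,l2,l3)" by (cases a; cases b; cases c; cases l) auto
  let ?d = "a1*(b2*c3 - b3*c2) - a2*(b1*c3 - b3*c1) + a3*(b1*c2 - b2*c1)"
  have h: "l1*a1+l2*a2+l3*a3 = 0" "l1*b1+l2*b2+l3*b3 = 0" "l1*c1+l2*c2+l3*c3 = 0"
    using assms e by (auto simp: incident_def)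
  have "?d * l1 = 0" "?d * l2 = 0" "?d * l3 = 0" using h by algebra+
  then have "?d = 0" using assms(1) e by auto
  then show ?thesis using e by (simp add: det3_def)
qed

lemma on_line:
  fixes l a b c :: "'a::field \<times> 'a \<times> 'a"
  assumes "normalized l" "normalized b" "normalized c" "b \<noteq> c" "incident b l" "incident c l" "det3 a b c = 0"
  shows "incident a l"
proof -
  have m: "cross b c \<noteq> (0,0,0)" using cross_zero_eq assms by blast
  obtain a1 a2 a3 b1 b2 b3 c1 c2 c3 l1 l2 l3 where e: "a=(a1,a2,a3)" "b=(b1,b2,b3)" "c=(c1,c2,c3)" "l=(l1,l2,l3)" by (cases a; cases b; cases c; cases l) auto
  let ?s = "l1*a1+l2*a2+l3*a3"
  have h: "l1*b1+l2*b2+l3*b3 = 0" "l1*c1+l2*c2+l3*c3 = 0" "a1*(b2*c3 - b3*c2) - a2*(b1*c3 - b3*c1) + a3*(b1*c2 - b2*c1) = 0"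
    using assms e by (auto simp: incident_def det3_def)
  have "?s * (b2*c3 - b3*c2) = 0" "?s * (b3*c1 - b1*c3) = 0" "?s * (b1*c2 - b2*c1) = 0" using h by algebra+
  then have "?s = 0" using m e by (auto simp: cross_def)
  then show ?thesis using e by (simp add: incident_def)
qed

lemma det_mult_raw:
  fixes r11 r12 r13 r21 r22 r23 r31 r32 r33 x1 x2 x3 y1 y2 y3 z1 z2 z3 :: "'a::comm_ring_1"
  shows "det3 (r11*x1+r12*x2+r13*x3, r21*x1+r22*x2+r23*x3, r31*x1+r32*x2+r33*x3)
              (r11*y1+r12*y2+r13*y3, r21*y1+r22*y2+r23*y3, r31*y1+r32*y2+r33*y3)
              (r11*z1+r12*z2+r13*z3, r21*z1+r22*z2+r23*z3, r31*z1+r32*z2+r33*z3)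
       = det3 (r11,r12,r13) (r21,r22,r23) (r31,r32,r33) * det3 (x1,x2,x3) (y1,y2,y3) (z1,z2,z3)"
  unfolding det3_def prod.case by (simp add: algebra_simps)

lemma adj_raw:
  fixes a1 a2 a3 b1 b2 b3 p1 p2 p3 :: "'a::comm_ring_1"
  shows "det3 (cross (b1,b2,b3) (p1,p2,p3)) (cross (p1,p2,p3) (a1,a2,a3)) (cross (a1,a2,a3) (b1,b2,b3))
     = (det3 (a1,a2,a3) (b1,b2,b3) (p1,p2,p3))^2"
  unfolding det3_def cross_def prod.case by (simp add: algebra_simps power2_eq_square)

lemma dot_cross: "det3 (x1,x2,x3) b c = (case cross b c of (r1,r2,r3) \<Rightarrow> r1*x1+r2*x2+r3*x3)"
  by (cases b; cases c) (simp add: det3_def cross_def algebra_simps)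

lemma adj: "det3 (cross b p) (cross p a) (cross a b) = (det3 a b p)^2"
  by (cases a; cases b; cases p) (simp only: adj_raw)

lemma transform:
  fixes a0 b0 P X Y Z :: "'a::comm_ring_1 \<times> 'a \<times> 'a"
  shows "(det3 a0 b0 P)^2 * det3 X Y Z =
    det3 (det3 X b0 P, det3 a0 X P, det3 a0 b0 X) (det3 Y b0 P, det3 a0 Y P, det3 a0 b0 Y) (det3 Z b0 P, det3 a0 Z P, det3 a0 b0 Z)"
proof -
  obtain r11 r12 r13 where r1: "cross b0 P = (r11,r12,r13)" by (cases "cross b0 P") auto
  obtain r21 r22 r23 where r2: "cross P a0 = (r21,r22,r23)" by (cases "cross P a0") auto
  obtain r31 r32 r33 where r3: "cross a0 b0 = (r31,r32,r33)" by (cases "cross a0 b0") auto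
  obtain x1 x2 x3 y1 y2 y3 z1 z2 z3 where e: "X=(x1,x2,x3)" "Y=(y1,y2,y3)" "Z=(z1,z2,z3)" by (cases X; cases Y; cases Z) auto
  have h: "\<And>v1 v2 v3. det3 (v1,v2,v3) b0 P = r11*v1+r12*v2+r13*v3"
          "\<And>v1 v2 v3. det3 a0 (v1,v2,v3) P = r21*v1+r22*v2+r23*v3"
          "\<And>v1 v2 v3. det3 a0 b0 (v1,v2,v3) = r31*v1+r32*v2+r33*v3"
  proof -
    fix v1 v2 v3
    show "det3 (v1,v2,v3) b0 P = r11*v1+r12*v2+r13*v3" by (simp add: dot_cross r1)
    have "det3 a0 (v1,v2,v3) P = det3 (v1,v2,v3) P a0" by (rule det3_cyc)
    then show "det3 a0 (v1,v2,v3) P = r21*v1+r22*v2+r23*v3" by (simp add: dot_cross r2)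
    have "det3 a0 b0 (v1,v2,v3) = det3 (v1,v2,v3) a0 b0" by (rule det3_cyc[symmetric])
    then show "det3 a0 b0 (v1,v2,v3) = r31*v1+r32*v2+r33*v3" by (simp add: dot_cross r3)
  qed
  have "det3 b0 P a0 = det3 a0 b0 P" by (rule det3_cyc[symmetric])
  then have "det3 (r11,r12,r13) (r21,r22,r23) (r31,r32,r33) = (det3 a0 b0 P)^2"
    using adj[of b0 P a0] r1 r2 r3 by simp
  then show ?thesis
    unfolding e h det_mult_raw by simp
qed

lemma line_thru:
  fixes X Y :: "'a::field \<times> 'a \<times> 'a"
  assumes "normalized X" "normalized Y" "X \<noteq> Y"
  shows "nrm (cross X Y) \<in> proj_lines" "\<And>Z. incident Z (nrm (cross X Y)) \<longleftrightarrow> det3 Z X Y = 0"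
proof -
  show "nrm (cross X Y) \<in> proj_lines" by (simp add: proj_lines_def nrm_normalized)
  have "cross X Y \<noteq> (0,0,0)" using cross_zero_eq assms by blast
  then show "\<And>Z. incident Z (nrm (cross X Y)) \<longleftrightarrow> det3 Z X Y = 0"
    by (simp add: nrm_incident incident_cross)
qed


lemma char_inj:
  assumes "CHAR('a::comm_ring_1) = 0 \<or> CHAR('a) > n" "j \<le> n" "k \<le> n" "(of_nat j :: 'a) = of_nat k"
  shows "j = k"
proof (rule ccontr)
  assume ne: "j \<noteq> k"
  { fix j k :: nat assume jk: "j < k" "k \<le> n" "(of_nat j :: 'a) = of_nat k"
    then have "(of_nat (k - j) :: 'a) = 0" by (simp add: of_nat_diff)
    then have "CHAR('a) dvd (k - j)" by (simp add: of_nat_eq_0_iff_char_dvd)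
    moreover have "0 < k - j" "k - j \<le> n" using jk by auto
    ultimately have False using assms(1) by (auto dest: dvd_imp_le) }
  note * = this
  show False
  proof (cases "j < k")
    case True then show ?thesis using * assms by blast
  next
    case False then have "k < j" using ne by auto
    then show ?thesis using * assms by metis
  qed
qed

lemma concurrent_false:
  fixes L1 L2 L3 :: "('a::field \<times> 'a \<times> 'a) set" and l1 l2 l3 P :: "'a \<times> 'a \<times> 'a"
  assumes char: "CHAR('a) = 0 \<or> CHAR('a) > n" and n2: "n \<ge> 2"
  and fin: "finite L1" "finite L2" "finite L3"
  and card: "card L1 = n" "card L2 = n" "card L3 = n"
  and sub: "L1 \<subseteq> proj_points" "L2 \<subseteq> proj_points" "L3 \<subseteq> proj_points"
  and disj: "L1 \<inter> L2 = {}" "L1 \<inter> L3 = {}" "L2 \<inter> L3 = {}"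
  and net: "\<And>l. l \<in> proj_lines \<Longrightarrow> (points_on l \<inter> L1 \<noteq> {} \<and> points_on l \<inter> L2 \<noteq> {}) \<or>
     (points_on l \<inter> L1 \<noteq> {} \<and> points_on l \<inter> L3 \<noteq> {}) \<or> (points_on l \<inter> L2 \<noteq> {} \<and> points_on l \<inter> L3 \<noteq> {}) \<Longrightarrow>
     card (points_on l \<inter> L1) = 1 \<and> card (points_on l \<inter> L2) = 1 \<and> card (points_on l \<inter> L3) = 1"
  and lines: "l1 \<in> proj_lines" "l2 \<in> proj_lines" "l3 \<in> proj_lines"
  and on: "L1 \<subseteq> points_on l1" "L2 \<subseteq> points_on l2" "L3 \<subseteq> points_on l3"
  and P: "P \<in> points_on l1" "P \<in> points_on l2" "P \<in> points_on l3"
  shows False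
proof -
  have nz: "L1 \<noteq> {}" "L2 \<noteq> {}" "L3 \<noteq> {}" using card n2 by auto
  have nl: "normalized l1" "normalized l2" "normalized l3" using lines by (auto simp: proj_lines_def)
  have nP: "normalized P" using P by (auto simp: points_on_def proj_points_def)
  have iP: "incident P l1" "incident P l2" "incident P l3" using P by (auto simp: points_on_def)
  have nX: "\<And>X. X \<in> L1 \<union> L2 \<union> L3 \<Longrightarrow> normalized X" using sub by (auto simp: proj_points_def)
  have iX: "\<And>X. X \<in> L1 \<Longrightarrow> incident X l1" "\<And>X. X \<in> L2 \<Longrightarrow> incident X l2" "\<And>X. X \<in> L3 \<Longrightarrow> incident X l3"
    using on by (auto simp: points_on_def)
  have c1: "card L1 \<noteq> 1" "card L2 \<noteq> 1" "card L3 \<noteq> 1" using card n2 by auto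
  have eq: "points_on l1 \<inter> L1 = L1" "points_on l2 \<inter> L2 = L2" "points_on l3 \<inter> L3 = L3" using on by auto
  have mem: "\<And>X l. X \<in> L1 \<union> L2 \<union> L3 \<Longrightarrow> incident X l \<Longrightarrow> X \<in> points_on l"
    using sub by (auto simp: points_on_def)
  have A12: "\<And>X. X \<in> L1 \<Longrightarrow> \<not> incident X l2"
  proof
    fix X assume X: "X \<in> L1" "incident X l2"
    then have "X \<in> points_on l2 \<inter> L1" using mem by blast
    then have "points_on l2 \<inter> L1 \<noteq> {}" by blast
    moreover have "points_on l2 \<inter> L2 \<noteq> {}" using eq nz by simp
    ultimately have "card (points_on l2 \<inter> L2) = 1" using net[OF lines(2)] by blast
    then show False using eq c1 by simp
  qed
  have A13: "\<And>X. X \<in> L1 \<Longrightarrow> \<not> incident X l3"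
  proof
    fix X assume X: "X \<in> L1" "incident X l3"
    then have "X \<in> points_on l3 \<inter> L1" using mem by blast
    then have "points_on l3 \<inter> L1 \<noteq> {}" by blast
    moreover have "points_on l3 \<inter> L3 \<noteq> {}" using eq nz by simp
    ultimately have "card (points_on l3 \<inter> L3) = 1" using net[OF lines(3)] by blast
    then show False using eq c1 by simp
  qed
  have A21: "\<And>X. X \<in> L2 \<Longrightarrow> \<not> incident X l1"
  proof
    fix X assume X: "X \<in> L2" "incident X l1"
    then have "X \<in> points_on l1 \<inter> L2" using mem by blast
    then have "points_on l1 \<inter> L2 \<noteq> {}" by blast
    moreover have "points_on l1 \<inter> L1 \<noteq> {}" using eq nz by simp
    ultimately have "card (points_on l1 \<inter> L1) = 1" using net[OF lines(1)] by blast
    then show False using eq c1 by simp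
  qed
  have A23: "\<And>X. X \<in> L2 \<Longrightarrow> \<not> incident X l3"
  proof
    fix X assume X: "X \<in> L2" "incident X l3"
    then have "X \<in> points_on l3 \<inter> L2" using mem by blast
    then have "points_on l3 \<inter> L2 \<noteq> {}" by blast
    moreover have "points_on l3 \<inter> L3 \<noteq> {}" using eq nz by simp
    ultimately have "card (points_on l3 \<inter> L3) = 1" using net[OF lines(3)] by blast
    then show False using eq c1 by simp
  qed
  have A31: "\<And>X. X \<in> L3 \<Longrightarrow> \<not> incident X l1"
  proof
    fix X assume X: "X \<in> L3" "incident X l1"
    then have "X \<in> points_on l1 \<inter> L3" using mem by blast
    then have "points_on l1 \<inter> L3 \<noteq> {}" by blast
    moreover have "points_on l1 \<inter> L1 \<noteq> {}" using eq nz by simp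
    ultimately have "card (points_on l1 \<inter> L1) = 1" using net[OF lines(1)] by blast
    then show False using eq c1 by simp
  qed
  have A32: "\<And>X. X \<in> L3 \<Longrightarrow> \<not> incident X l2"
  proof
    fix X assume X: "X \<in> L3" "incident X l2"
    then have "X \<in> points_on l2 \<inter> L3" using mem by blast
    then have "points_on l2 \<inter> L3 \<noteq> {}" by blast
    moreover have "points_on l2 \<inter> L2 \<noteq> {}" using eq nz by simp
    ultimately have "card (points_on l2 \<inter> L2) = 1" using net[OF lines(2)] by blast
    then show False using eq c1 by simp
  qed
  have Pn: "P \<notin> L1" "P \<notin> L2" "P \<notin> L3" using A12 A21 A31 iP by blast+
  obtain a0 where a0: "a0 \<in> L1" using nz by auto
  obtain b0 where b0: "b0 \<in> L2" using nz by auto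
  obtain c0 where c0: "c0 \<in> L3" using nz by auto
  define U where "U = (\<lambda>X. det3 X b0 P)"
  define V where "V = (\<lambda>X. det3 a0 X P)"
  define W where "W = (\<lambda>X. det3 a0 b0 X)"
  define D where "D = det3 a0 b0 P"
  have tr: "\<And>X Y Z. D^2 * det3 X Y Z = det3 (U X, V X, W X) (U Y, V Y, W Y) (U Z, V Z, W Z)"
    unfolding U_def V_def W_def D_def by (rule transform)
  have UVWP: "U P = 0" "V P = 0" "W P = D"
    unfolding U_def V_def W_def D_def by (simp_all add: det3_aba det3_abb)
  have ol: "\<And>X Y l. normalized l \<Longrightarrow> Y \<in> L1 \<union> L2 \<union> L3 \<Longrightarrow> Y \<noteq> P \<Longrightarrow> incident Y l \<Longrightarrow> incident P l
      \<Longrightarrow> det3 X Y P = 0 \<Longrightarrow> incident X l"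
  proof -
    fix X Y l assume h: "normalized l" "Y \<in> L1 \<union> L2 \<union> L3" "Y \<noteq> P" "incident Y l" "incident P l" "det3 X Y P = 0"
    show "incident X l" by (rule on_line[OF h(1) nX[OF h(2)] nP h(3) h(4) h(5) h(6)])
  qed
  have a0U: "a0 \<in> L1 \<union> L2 \<union> L3" and a0P: "a0 \<noteq> P" and b0U: "b0 \<in> L1 \<union> L2 \<union> L3" and b0P: "b0 \<noteq> P"
    using a0 b0 Pn by auto
  have D0: "D \<noteq> 0"
  proof
    assume "D = 0"
    then have "det3 b0 a0 P = 0" unfolding D_def using det3_swap12[of b0 a0 P] by simp
    then have "incident b0 l1" by (rule ol[OF nl(1) a0U a0P iX(1)[OF a0] iP(1)])
    then show False using A21 b0 by blast
  qed
  have Ua: "\<And>a. a \<in> L1 \<Longrightarrow> U a \<noteq> 0"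
  proof
    fix a assume a: "a \<in> L1" "U a = 0"
    then have "det3 a b0 P = 0" unfolding U_def by simp
    then have "incident a l2" by (rule ol[OF nl(2) b0U b0P iX(2)[OF b0] iP(2)])
    then show False using A12 a by blast
  qed
  have Va: "\<And>a. a \<in> L1 \<Longrightarrow> V a = 0"
    unfolding V_def by (rule collinear3[OF normalized_nz[OF nl(1)] iX(1)[OF a0] iX(1) iP(1)])
  have Vb: "\<And>b. b \<in> L2 \<Longrightarrow> V b \<noteq> 0"
  proof
    fix b assume b: "b \<in> L2" "V b = 0"
    then have "det3 b a0 P = 0" unfolding V_def using det3_swap12[of b a0 P] by simp
    then have "incident b l1" by (rule ol[OF nl(1) a0U a0P iX(1)[OF a0] iP(1)])
    then show False using A21 b by blast
  qed
  have Ub: "\<And>b. b \<in> L2 \<Longrightarrow> U b = 0"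
    unfolding U_def by (rule collinear3[OF normalized_nz[OF nl(2)] iX(2) iX(2)[OF b0] iP(2)])
  have Uc: "\<And>c. c \<in> L3 \<Longrightarrow> U c \<noteq> 0"
  proof
    fix c assume c: "c \<in> L3" "U c = 0"
    then have "det3 c b0 P = 0" unfolding U_def by simp
    then have "incident c l2" by (rule ol[OF nl(2) b0U b0P iX(2)[OF b0] iP(2)])
    then show False using A32 c by blast
  qed
  have Vc0: "\<And>c. c \<in> L3 \<Longrightarrow> V c \<noteq> 0"
  proof
    fix c assume c: "c \<in> L3" "V c = 0"
    then have "det3 c a0 P = 0" unfolding V_def using det3_swap12[of c a0 P] by simp
    then have "incident c l1" by (rule ol[OF nl(1) a0U a0P iX(1)[OF a0] iP(1)])
    then show False using A31 c by blast
  qed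
  define r where "r = V c0 / U c0"
  have r0: "r \<noteq> 0" unfolding r_def using Uc Vc0 c0 by simp
  have Vc: "\<And>c. c \<in> L3 \<Longrightarrow> V c = r * U c"
  proof -
    fix c assume c: "c \<in> L3"
    have "det3 c c0 P = 0" by (rule collinear3[OF normalized_nz[OF nl(3)] iX(3)[OF c] iX(3)[OF c0] iP(3)])
    then have "det3 (U c, V c, W c) (U c0, V c0, W c0) (U P, V P, W P) = 0" using tr[of c c0 P] by simp
    then have "D * (U c * V c0 - V c * U c0) = 0" unfolding UVWP by (simp add: det3_def algebra_simps)
    then have "U c * V c0 = V c * U c0" using D0 by simp
    then show "V c = r * U c" unfolding r_def using Uc c0 by (simp add: field_simps)
  qed
  define Y1 where "Y1 = (\<lambda>a. W a / U a)"
  define Y2 where "Y2 = (\<lambda>b. W b / V b)"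
  define Y3 where "Y3 = (\<lambda>c. W c / U c)"
  have key: "\<And>a b c. a \<in> L1 \<Longrightarrow> b \<in> L2 \<Longrightarrow> c \<in> L3 \<Longrightarrow> det3 a b c = 0 \<longleftrightarrow> Y3 c = Y1 a + r * Y2 b"
  proof -
    fix a b c assume abc: "a \<in> L1" "b \<in> L2" "c \<in> L3"
    have "D^2 * det3 a b c = det3 (U a, 0, W a) (0, V b, W b) (U c, r * U c, W c)"
      using tr[of a b c] Va[OF abc(1)] Ub[OF abc(2)] Vc[OF abc(3)] by simp
    also have "\<dots> = U a * V b * W c - U a * W b * r * U c - W a * V b * U c"
      by (simp add: det3_def algebra_simps)
    finally have e: "D^2 * det3 a b c = U a * V b * W c - U a * W b * r * U c - W a * V b * U c" .
    have nz3: "U a \<noteq> 0" "V b \<noteq> 0" "U c \<noteq> 0" using abc Ua Vb Uc by auto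
    have "det3 a b c = 0 \<longleftrightarrow> U a * V b * W c - U a * W b * r * U c - W a * V b * U c = 0"
      using e D0 by (metis mult_eq_0_iff power_not_zero)
    also have "\<dots> \<longleftrightarrow> W c / U c = W a / U a + r * (W b / V b)"
      using nz3 by (simp add: field_simps)
    finally show "det3 a b c = 0 \<longleftrightarrow> Y3 c = Y1 a + r * Y2 b" unfolding Y1_def Y2_def Y3_def .
  qed
  have pt: "\<And>X l. X \<in> L1 \<union> L2 \<union> L3 \<Longrightarrow> incident X l \<Longrightarrow> X \<in> points_on l" by (rule mem)
  have S1: "\<And>a b. a \<in> L1 \<Longrightarrow> b \<in> L2 \<Longrightarrow> \<exists>c\<in>L3. det3 a b c = 0"
  proof -
    fix a b assume ab: "a \<in> L1" "b \<in> L2"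
    have ne: "a \<noteq> b" using ab disj by blast
    have na: "normalized a" "normalized b" using nX ab by blast+
    note lt = line_thru[OF na ne]
    let ?l = "nrm (cross a b)"
    have "a \<in> points_on ?l" using pt ab lt(2)[of a] by (simp add: det3_aab)
    moreover have "b \<in> points_on ?l" using pt ab lt(2)[of b] by (simp add: det3_aba)
    ultimately have "card (points_on ?l \<inter> L3) = 1" using net[OF lt(1)] ab by blast
    then obtain c where "c \<in> points_on ?l" "c \<in> L3" by (metis One_nat_def card_1_singletonE insertI1 IntD1 IntD2)
    then have "det3 c a b = 0" "c \<in> L3" using lt(2)[of c] by (auto simp: points_on_def)
    then show "\<exists>c\<in>L3. det3 a b c = 0" using det3_cyc[of c a b] by auto
  qed
  have S2: "\<And>a c. a \<in> L1 \<Longrightarrow> c \<in> L3 \<Longrightarrow> \<exists>b\<in>L2. det3 a b c = 0"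
  proof -
    fix a c assume ac: "a \<in> L1" "c \<in> L3"
    have ne: "a \<noteq> c" using ac disj by blast
    have na: "normalized a" "normalized c" using nX ac by blast+
    note lt = line_thru[OF na ne]
    let ?l = "nrm (cross a c)"
    have "a \<in> points_on ?l" using pt ac lt(2)[of a] by (simp add: det3_aab)
    moreover have "c \<in> points_on ?l" using pt ac lt(2)[of c] by (simp add: det3_aba)
    ultimately have "card (points_on ?l \<inter> L2) = 1" using net[OF lt(1)] ac by blast
    then obtain b where "b \<in> points_on ?l" "b \<in> L2" by (metis One_nat_def card_1_singletonE insertI1 IntD1 IntD2)
    then have "det3 b a c = 0" "b \<in> L2" using lt(2)[of b] by (auto simp: points_on_def)
    then show "\<exists>b\<in>L2. det3 a b c = 0" using det3_swap12[of b a c] by auto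
  qed
  have S3: "\<And>a a' b c. a \<in> L1 \<Longrightarrow> a' \<in> L1 \<Longrightarrow> b \<in> L2 \<Longrightarrow> c \<in> L3 \<Longrightarrow> det3 a b c = 0 \<Longrightarrow> det3 a' b c = 0 \<Longrightarrow> a = a'"
  proof -
    fix a a' b c assume h: "a \<in> L1" "a' \<in> L1" "b \<in> L2" "c \<in> L3" "det3 a b c = 0" "det3 a' b c = 0"
    have ne: "b \<noteq> c" using h disj by blast
    have na: "normalized b" "normalized c" using nX h by blast+
    note lt = line_thru[OF na ne]
    let ?l = "nrm (cross b c)"
    have "b \<in> points_on ?l" using pt h lt(2)[of b] by (simp add: det3_aab)
    moreover have "c \<in> points_on ?l" using pt h lt(2)[of c] by (simp add: det3_aba)
    ultimately have "card (points_on ?l \<inter> L1) = 1" using net[OF lt(1)] h by blast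
    moreover have "a \<in> points_on ?l \<inter> L1" "a' \<in> points_on ?l \<inter> L1" using pt h lt(2)[of a] lt(2)[of a'] by auto
    ultimately show "a = a'" by (metis card_1_singletonE singletonD)
  qed
  obtain a a' where aa: "a \<in> L1" "a' \<in> L1" "a \<noteq> a'"
  proof -
    have "1 < card L1" using card n2 by simp
    then have "\<exists>a a'. a \<in> L1 \<and> a' \<in> L1 \<and> a \<noteq> a'" using fin(1) card_le_Suc0_iff_eq by fastforce
    then obtain a a' where "a \<in> L1" "a' \<in> L1" "a \<noteq> a'" by blast
    then show ?thesis using that by blast
  qed
  have Ydif: "Y1 a \<noteq> Y1 a'"
  proof
    assume eqY: "Y1 a = Y1 a'"
    obtain c where c: "c \<in> L3" "det3 a b0 c = 0" using S1[OF aa(1) b0] by blast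
    then have "Y3 c = Y1 a + r * Y2 b0" using key aa b0 by blast
    then have "Y3 c = Y1 a' + r * Y2 b0" using eqY by simp
    then have "det3 a' b0 c = 0" using key aa b0 c by blast
    then show False using S3[OF aa(1) aa(2) b0 c(1) c(2)] aa by blast
  qed
  define d where "d = (Y1 a - Y1 a') / r"
  have d0: "d \<noteq> 0" unfolding d_def using Ydif r0 by simp
  have step: "\<And>b. b \<in> L2 \<Longrightarrow> \<exists>b'\<in>L2. Y2 b' = Y2 b + d"
  proof -
    fix b assume b: "b \<in> L2"
    obtain c where c: "c \<in> L3" "det3 a b c = 0" using S1[OF aa(1) b] by blast
    obtain b' where b': "b' \<in> L2" "det3 a' b' c = 0" using S2[OF aa(2) c(1)] by blast
    have "Y3 c = Y1 a + r * Y2 b" using key aa b c by blast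
    moreover have "Y3 c = Y1 a' + r * Y2 b'" using key aa b' c by blast
    ultimately have e: "r * Y2 b' = (Y1 a - Y1 a') + r * Y2 b" by (simp add: algebra_simps)
    have "Y2 b' = (r * Y2 b') / r" using r0 by simp
    also have "\<dots> = Y2 b + d" unfolding e d_def using r0 by (simp add: field_simps)
    finally have "Y2 b' = Y2 b + d" .
    then show "\<exists>b'\<in>L2. Y2 b' = Y2 b + d" using b' by blast
  qed
  have orbit: "\<And>k. \<exists>b\<in>L2. Y2 b = Y2 b0 + of_nat k * d"
  proof -
    fix k show "\<exists>b\<in>L2. Y2 b = Y2 b0 + of_nat k * d"
    proof (induction k)
      case 0 then show ?case using b0 by auto
    next
      case (Suc k)
      then obtain b where "b \<in> L2" "Y2 b = Y2 b0 + of_nat k * d" by blast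
      then obtain b' where "b' \<in> L2" "Y2 b' = Y2 b + d" using step by blast
      then show ?case using \<open>Y2 b = Y2 b0 + of_nat k * d\<close> by (auto simp: algebra_simps)
    qed
  qed
  define f where "f = (\<lambda>k::nat. Y2 b0 + of_nat k * d)"
  have "f ` {0..n} \<subseteq> Y2 ` L2"
  proof
    fix y assume "y \<in> f ` {0..n}"
    then obtain k where "y = f k" by blast
    moreover obtain b where "b \<in> L2" "Y2 b = Y2 b0 + of_nat k * d" using orbit by blast
    ultimately show "y \<in> Y2 ` L2" unfolding f_def by (metis image_eqI)
  qed
  then have "card (f ` {0..n}) \<le> card (Y2 ` L2)" using fin(2) by (simp add: card_mono)
  also have "\<dots> \<le> n" using card(2) fin(2) card_image_le by metis
  finally have le: "card (f ` {0..n}) \<le> n" .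
  have "inj_on f {0..n}"
  proof (rule inj_onI)
    fix j k assume jk: "j \<in> {0..n}" "k \<in> {0..n}" "f j = f k"
    then have "of_nat j * d = of_nat k * d" unfolding f_def by simp
    then have "(of_nat j :: 'a) = of_nat k" using d0 by simp
    then show "j = k" using char_inj[OF char] jk by auto
  qed
  then have "card (f ` {0..n}) = Suc n" by (simp add: card_image)
  then show False using le by simp
qed


theorem lemma4p2:
  fixes L1 L2 L3 :: "('a::alg_closed_field \<times> 'a \<times> 'a) set" and n :: nat
  assumes "CHAR('a) = 0 \<or> CHAR('a) > n"
    and "n \<ge> 4"
    and "dual_3net L1 L2 L3 n"
    and "regular_3net L1 L2 L3"
  shows "triangular_3net L1 L2 L3"
proof -
  have D: "(\<forall>i\<in>{1::nat,2,3}. (if i = 1 then L1 else if i = 2 then L2 else L3) \<subseteq> proj_points \<and> finite (if i = 1 then L1 else if i = 2 then L2 else L3) \<and> card (if i = 1 then L1 else if i = 2 then L2 else L3) = n) \<and>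
       (\<forall>i\<in>{1::nat,2,3}. \<forall>j\<in>{1::nat,2,3}. i \<noteq> j \<longrightarrow> (if i = 1 then L1 else if i = 2 then L2 else L3) \<inter> (if j = 1 then L1 else if j = 2 then L2 else L3) = {}) \<and>
       (\<forall>l\<in>proj_lines. (\<exists>i\<in>{1::nat,2,3}. \<exists>j\<in>{1::nat,2,3}. i \<noteq> j \<and>
            points_on l \<inter> (if i = 1 then L1 else if i = 2 then L2 else L3) \<noteq> {} \<and> points_on l \<inter> (if j = 1 then L1 else if j = 2 then L2 else L3) \<noteq> {}) \<longrightarrow>
          (\<forall>k\<in>{1::nat,2,3}. card (points_on l \<inter> (if k = 1 then L1 else if k = 2 then L2 else L3)) = 1))"
    using assms(3) unfolding dual_3net_def Let_def by simp
  have fc: "finite L1" "finite L2" "finite L3" "card L1 = n" "card L2 = n" "card L3 = n"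
     "L1 \<subseteq> proj_points" "L2 \<subseteq> proj_points" "L3 \<subseteq> proj_points"
    using D by auto
  have disj: "L1 \<inter> L2 = {}" "L1 \<inter> L3 = {}" "L2 \<inter> L3 = {}"
    using D by (auto simp: Ball_def)
  have net: "\<And>l. l \<in> proj_lines \<Longrightarrow> (points_on l \<inter> L1 \<noteq> {} \<and> points_on l \<inter> L2 \<noteq> {}) \<or>
     (points_on l \<inter> L1 \<noteq> {} \<and> points_on l \<inter> L3 \<noteq> {}) \<or> (points_on l \<inter> L2 \<noteq> {} \<and> points_on l \<inter> L3 \<noteq> {}) \<Longrightarrow>
     card (points_on l \<inter> L1) = 1 \<and> card (points_on l \<inter> L2) = 1 \<and> card (points_on l \<inter> L3) = 1"
  proof -
    fix l assume l: "l \<in> proj_lines" and h: "(points_on l \<inter> L1 \<noteq> {} \<and> points_on l \<inter> L2 \<noteq> {}) \<or>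
     (points_on l \<inter> L1 \<noteq> {} \<and> points_on l \<inter> L3 \<noteq> {}) \<or> (points_on l \<inter> L2 \<noteq> {} \<and> points_on l \<inter> L3 \<noteq> {})"
    have "\<exists>i\<in>{1::nat,2,3}. \<exists>j\<in>{1::nat,2,3}. i \<noteq> j \<and>
            points_on l \<inter> (if i = 1 then L1 else if i = 2 then L2 else L3) \<noteq> {} \<and> points_on l \<inter> (if j = 1 then L1 else if j = 2 then L2 else L3) \<noteq> {}"
      using h
    proof (elim disjE)
      assume "points_on l \<inter> L1 \<noteq> {} \<and> points_on l \<inter> L2 \<noteq> {}"
      then show ?thesis by (intro bexI[where x=1] bexI[where x=2]) auto
    next
      assume "points_on l \<inter> L1 \<noteq> {} \<and> points_on l \<inter> L3 \<noteq> {}"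
      then show ?thesis by (intro bexI[where x=1] bexI[where x=3]) auto
    next
      assume "points_on l \<inter> L2 \<noteq> {} \<and> points_on l \<inter> L3 \<noteq> {}"
      then show ?thesis by (intro bexI[where x=2] bexI[where x=3]) auto
    qed
    then have "\<forall>k\<in>{1::nat,2,3}. card (points_on l \<inter> (if k = 1 then L1 else if k = 2 then L2 else L3)) = 1"
      using D l by blast
    then show "card (points_on l \<inter> L1) = 1 \<and> card (points_on l \<inter> L2) = 1 \<and> card (points_on l \<inter> L3) = 1"
      by auto
  qed
  obtain l1 l2 l3 where ls: "l1 \<in> proj_lines" "l2 \<in> proj_lines" "l3 \<in> proj_lines"
    "l1 \<noteq> l2" "l1 \<noteq> l3" "l2 \<noteq> l3" "L1 \<subseteq> points_on l1" "L2 \<subseteq> points_on l2" "L3 \<subseteq> points_on l3"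
    using assms(4) unfolding regular_3net_def by blast
  have "points_on l1 \<inter> points_on l2 \<inter> points_on l3 = {}"
  proof (rule ccontr)
    assume "points_on l1 \<inter> points_on l2 \<inter> points_on l3 \<noteq> {}"
    then obtain P where P: "P \<in> points_on l1" "P \<in> points_on l2" "P \<in> points_on l3" by blast
    show False
      by (rule concurrent_false[OF assms(1) _ fc(1-3) fc(4-6) fc(7-9) disj net ls(1-3) ls(7-9) P])
         (use assms(2) in simp_all)
  qed
  then show ?thesis unfolding triangular_3net_def using ls by blast
qed

end
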